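(* There is a universal constant $c$ such that for every sufficiently large integer $N$ there is a covering of $\mathbb{S}^2$ by $N$ strips of Euclidean half-width $\frac{10\ln N}{N}$ in which no point of $\mathbb{S}^2$ is covered more than $c\ln N$ times.
   Context: $\mathbb{S}^2=\{x\in\mathbb{R}^3:|x|=1\}$. For $x\in\mathbb{S}^2$ and $0\le w\le 1$, the strip centered at $x$ of Euclidean half-width $w$ is $\{v\in\mathbb{S}^2:|\langle v,x\rangle|\le w\}$. *)

theory Defs
  imports "HOL-Analysis.Analysis"
begin

definition sphere2 :: "(real^3) set" where
  "sphere2 = {x. norm x = 1}"

definition strip :: "real^3 \<Rightarrow> real \<Rightarrow> (real^3) set" where
  "strip x w = {v \<in> sphere2. \<bar>inner v x\<bar> \<le> w}"

end

theory Submission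
  imports Defs
begin


lemma pow_fact_le_exp:
  fixes x :: real assumes "x \<ge> 0" shows "x ^ n / fact n \<le> exp x"
proof -
  have s: "summable (\<lambda>k. x ^ k / fact k)" using summable_exp[of x] by (simp add: field_simps)
  have "exp x = (\<Sum>k. x ^ k / fact k)" by (simp add: exp_def field_simps)
  moreover have "(\<Sum>k\<in>{n}. x ^ k / fact k) \<le> (\<Sum>k. x ^ k / fact k)"
    by (rule sum_le_suminf[OF s]) (use assms in auto)
  ultimately show ?thesis by simp
qed

definition sph :: "real \<Rightarrow> real \<Rightarrow> real^3" where
  "sph t p = vector [sin t * cos p, sin t * sin p, cos t]"

lemma norm_sph: "norm (sph t p) = 1"
proof -
  have "(norm (sph t p))^2 = sph t p \<bullet> sph t p" by (simp add: power2_norm_eq_inner)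
  also have "\<dots> = (sin t * cos p)^2 + (sin t * sin p)^2 + (cos t)^2"
    by (simp add: sph_def inner_vec_def sum_3 power2_eq_square)
  also have "\<dots> = (sin t)^2 * ((cos p)^2 + (sin p)^2) + (cos t)^2" by algebra
  also have "\<dots> = 1" using sin_cos_squared_add[of p] sin_cos_squared_add[of t] by simp
  finally show ?thesis using norm_ge_zero[of "sph t p"] by (simp add: power2_eq_1_iff)
qed

lemma sin_lip: "\<bar>sin (a::real) - sin b\<bar> \<le> \<bar>a - b\<bar>"
proof -
  have "\<bar>sin a - sin b\<bar> = 2 * \<bar>sin ((a - b) / 2)\<bar> * \<bar>cos ((a + b) / 2)\<bar>"
    by (simp add: sin_diff_sin abs_mult)
  also have "\<dots> \<le> 2 * \<bar>(a - b) / 2\<bar> * 1"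
    using abs_sin_x_le_abs_x[of "(a - b) / 2"] abs_cos_le_one[of "(a + b) / 2"]
    by (intro mult_mono) auto
  finally show ?thesis by simp
qed
lemma cos_lip: "\<bar>cos (a::real) - cos b\<bar> \<le> \<bar>a - b\<bar>"
proof -
  have "\<bar>cos a - cos b\<bar> = 2 * \<bar>sin ((a + b) / 2)\<bar> * \<bar>sin ((b - a) / 2)\<bar>"
    by (simp add: cos_diff_cos abs_mult)
  also have "\<dots> \<le> 2 * 1 * \<bar>(b - a) / 2\<bar>"
    using abs_sin_x_le_abs_x[of "(b - a) / 2"] abs_sin_le_one[of "(a + b) / 2"]
    by (intro mult_mono) auto
  finally show ?thesis by simp
qed

lemma sph_lip: "norm (sph t p - sph t' p') \<le> 3 * (\<bar>t - t'\<bar> + \<bar>p - p'\<bar>)"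
proof -
  have n: "norm (sph t p - sph t' p') \<le> (\<Sum>i\<in>UNIV. \<bar>(sph t p - sph t' p') $ i\<bar>)"
    by (rule norm_le_l1_cart)
  have c1: "\<bar>sin t * cos p - sin t' * cos p'\<bar> \<le> \<bar>t - t'\<bar> + \<bar>p - p'\<bar>"
  proof -
    have "sin t * cos p - sin t' * cos p' = sin t * (cos p - cos p') + cos p' * (sin t - sin t')" by (simp add: algebra_simps)
    hence "\<bar>sin t * cos p - sin t' * cos p'\<bar> \<le> \<bar>sin t\<bar> * \<bar>cos p - cos p'\<bar> + \<bar>cos p'\<bar> * \<bar>sin t - sin t'\<bar>"
      by (metis abs_mult abs_triangle_ineq)
    also have "\<dots> \<le> 1 * \<bar>p - p'\<bar> + 1 * \<bar>t - t'\<bar>"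
      by (intro add_mono mult_mono) (auto simp: sin_lip cos_lip)
    finally show ?thesis by simp
  qed
  have c2: "\<bar>sin t * sin p - sin t' * sin p'\<bar> \<le> \<bar>t - t'\<bar> + \<bar>p - p'\<bar>"
  proof -
    have "sin t * sin p - sin t' * sin p' = sin t * (sin p - sin p') + sin p' * (sin t - sin t')" by (simp add: algebra_simps)
    hence "\<bar>sin t * sin p - sin t' * sin p'\<bar> \<le> \<bar>sin t\<bar> * \<bar>sin p - sin p'\<bar> + \<bar>sin p'\<bar> * \<bar>sin t - sin t'\<bar>"
      by (metis abs_mult abs_triangle_ineq)
    also have "\<dots> \<le> 1 * \<bar>p - p'\<bar> + 1 * \<bar>t - t'\<bar>"
      by (intro add_mono mult_mono) (auto simp: sin_lip cos_lip)
    finally show ?thesis by simp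
  qed
  have c3: "\<bar>cos t - cos t'\<bar> \<le> \<bar>t - t'\<bar> + \<bar>p - p'\<bar>" using cos_lip[of t t'] by simp
  show ?thesis using n c1 c2 c3 by (simp add: sph_def sum_3)
qed

lemma sph_onto:
  assumes "norm (v::real^3) = 1"
  shows "\<exists>t p. 0 \<le> t \<and> t \<le> pi \<and> 0 \<le> p \<and> p < 2*pi \<and> v = sph t p"
proof -
  have sq: "(v$1)^2 + (v$2)^2 + (v$3)^2 = 1"
  proof -
    have "(v$1)^2 + (v$2)^2 + (v$3)^2 = v \<bullet> v" by (simp add: inner_vec_def sum_3 power2_eq_square)
    also have "\<dots> = 1" using assms by (simp add: power2_norm_eq_inner[symmetric])
    finally show ?thesis .
  qed
  have v3: "\<bar>v$3\<bar> \<le> 1" using component_le_norm_cart[of v 3] assms by simp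
  define t where "t = arccos (v$3)"
  have t: "0 \<le> t" "t \<le> pi" "cos t = v$3" using v3 by (auto simp: t_def arccos_lbound arccos_ubound cos_arccos_abs)
  have st: "sin t = sqrt (1 - (v$3)^2)" using v3 by (simp add: t_def sin_arccos_abs)
  have st2: "(sin t)^2 = (v$1)^2 + (v$2)^2" using st sq v3
    by (metis add_diff_cancel_right' abs_square_le_1 diff_ge_0_iff_ge real_sqrt_pow2)
  show ?thesis
  proof (cases "sin t = 0")
    case True
    hence "v$1 = 0" "v$2 = 0" using st2 by (auto simp: sum_power2_eq_zero_iff)
    hence "v = sph t 0" using t True by (auto simp: sph_def vec_eq_iff forall_3)
    thus ?thesis using t pi_gt_zero by (intro exI[of _ t] exI[of _ "0::real"]) auto
  next
    case False
    have "(v$1 / sin t)^2 + (v$2 / sin t)^2 = ((v$1)^2 + (v$2)^2) / (sin t)^2"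
      by (simp add: power_divide add_divide_distrib)
    also have "\<dots> = 1" using False by (simp add: st2[symmetric])
    finally have "(v$1 / sin t)^2 + (v$2 / sin t)^2 = 1" .
    then obtain p where p: "0 \<le> p" "p < 2*pi" "v$1 / sin t = cos p" "v$2 / sin t = sin p"
      using sincos_total_2pi by metis
    hence "v = sph t p" using t False by (auto simp: sph_def vec_eq_iff forall_3 field_simps)
    thus ?thesis using t p by auto
  qed
qed

definition NV :: "real \<Rightarrow> (real^3) set" where
  "NV e = (\<lambda>(a,b). sph (real a * e) (real b * e)) ` ({..nat \<lfloor>pi/e\<rfloor>} \<times> {..nat \<lfloor>2*pi/e\<rfloor>})"

lemma NV_finite: "finite (NV e)" by (simp add: NV_def)

lemma NV_card: "card (NV e) \<le> (nat \<lfloor>pi/e\<rfloor> + 1) * (nat \<lfloor>2*pi/e\<rfloor> + 1)"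
  unfolding NV_def by (rule order.trans[OF card_image_le]) (auto simp: card_cartesian_product)

lemma NV_norm: "u \<in> NV e \<Longrightarrow> norm u = 1" by (auto simp: NV_def norm_sph)

lemma floor_step:
  assumes "e > 0" "0 \<le> x" "x \<le> X"
  shows "nat \<lfloor>x/e\<rfloor> \<le> nat \<lfloor>X/e\<rfloor> \<and> \<bar>x - real (nat \<lfloor>x/e\<rfloor>) * e\<bar> \<le> e"
proof -
  have x0: "x / e \<ge> 0" using assms by simp
  have f: "real (nat \<lfloor>x/e\<rfloor>) = of_int \<lfloor>x/e\<rfloor>" using x0 by simp
  have "of_int \<lfloor>x/e\<rfloor> * e \<le> x" "x < (of_int \<lfloor>x/e\<rfloor> + 1) * e"
    using assms(1) by (simp_all add: floor_divide_lower floor_divide_upper)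
  hence "\<bar>x - real (nat \<lfloor>x/e\<rfloor>) * e\<bar> \<le> e" using f by (simp add: algebra_simps)
  moreover have "x/e \<le> X/e" using assms by (simp add: divide_right_mono)
  hence "nat \<lfloor>x/e\<rfloor> \<le> nat \<lfloor>X/e\<rfloor>" by (intro nat_mono floor_mono)
  ultimately show ?thesis by simp
qed

lemma NV_net:
  assumes "e > 0" "norm (v::real^3) = 1"
  shows "\<exists>u\<in>NV e. norm (v - u) \<le> 6 * e"
proof -
  obtain t p where tp: "0 \<le> t" "t \<le> pi" "0 \<le> p" "p < 2*pi" "v = sph t p" using sph_onto[OF assms(2)] by blast
  define a where "a = nat \<lfloor>t/e\<rfloor>"
  define b where "b = nat \<lfloor>p/e\<rfloor>"
  have a: "a \<le> nat \<lfloor>pi/e\<rfloor>" "\<bar>t - real a * e\<bar> \<le> e" using floor_step[OF assms(1) tp(1,2)] a_def by auto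
  have b: "b \<le> nat \<lfloor>2*pi/e\<rfloor>" "\<bar>p - real b * e\<bar> \<le> e" using floor_step[OF assms(1) tp(3), of "2*pi"] tp(4) b_def by auto
  have u: "sph (real a * e) (real b * e) \<in> NV e" using a b by (auto simp: NV_def)
  have "norm (v - sph (real a * e) (real b * e)) \<le> 3 * (e + e)"
    using sph_lip[of t p "real a * e" "real b * e"] tp(5) a b by simp
  thus ?thesis using u by force
qed



definition Sh :: "(real^3) set" where "Sh = cball 0 1 - ball 0 (3/5)"
definition band :: "real^3 \<Rightarrow> real \<Rightarrow> (real^3) set" where
  "band u h = {g \<in> Sh. \<bar>g \<bullet> u\<bar> \<le> h * norm g}"

lemma Sh_compact: "compact Sh"
  unfolding Sh_def by (intro compact_diff) auto

lemma Sh_lmeas: "Sh \<in> lmeasurable" by (rule lmeasurable_compact[OF Sh_compact])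

lemma band_compact: "compact (band u h)"
proof -
  have "band u h = Sh \<inter> {g. \<bar>g \<bullet> u\<bar> - h * norm g \<le> 0}" by (auto simp: band_def)
  moreover have "closed {g::real^3. \<bar>g \<bullet> u\<bar> - h * norm g \<le> 0}"
    by (intro closed_Collect_le continuous_intros) 
  ultimately show ?thesis using Sh_compact by (simp add: compact_Int_closed)
qed

lemma band_lmeas: "band u h \<in> lmeasurable" by (rule lmeasurable_compact[OF band_compact])

lemma band_sub: "band u h \<subseteq> Sh" by (auto simp: band_def)

lemma measure_Sh: "measure lebesgue Sh = 392/375 * pi"
proof -
  have "measure lebesgue Sh = measure lebesgue (cball (0::real^3) 1) - measure lebesgue (ball (0::real^3) (3/5))"
    unfolding Sh_def by (rule measure_Diff) (use emeasure_lborel_cball_finite[of "0::real^3" 1] in auto)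
  also have "\<dots> = measure lborel (cball (0::real^3) 1) - measure lborel (ball (0::real^3) (3/5))" by simp
  also have "\<dots> = 392/375 * pi" by (simp add: content_cball unit_ball_vol_3 content_ball power_divide)
  finally show ?thesis .
qed

lemma orth_axis3:
  fixes f :: "real^3 \<Rightarrow> real^3"
  assumes "orthogonal_transformation f" "f (axis 3 1) = u"
  shows "f y \<bullet> u = y $ 3"
proof -
  have "f y \<bullet> f (axis 3 1) = y \<bullet> axis 3 1" using assms(1) by (simp add: orthogonal_transformation_def)
  thus ?thesis using assms(2) by (simp add: inner_axis)
qed

lemma prodU3: "prod f (UNIV::3 set) = f 1 * f 2 * f 3"
  unfolding UNIV_3 by (simp add: ac_simps)

lemma measure_box3:
  assumes "a1 \<le> b1" "a2 \<le> b2" "a3 \<le> b3"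
  shows "measure lebesgue (cbox (vector [a1,a2,a3]) (vector [b1,b2,b3] :: real^3)) = (b1-a1)*(b2-a2)*(b3-a3)"
proof -
  have "vector [a1,a2,a3] \<in> cbox (vector [a1,a2,a3]) (vector [b1,b2,b3] :: real^3)"
    using assms by (simp add: mem_box_cart forall_3)
  hence ne: "cbox (vector [a1,a2,a3]) (vector [b1,b2,b3] :: real^3) \<noteq> {}" by auto
  have "measure lebesgue (cbox (vector [a1,a2,a3]) (vector [b1,b2,b3] :: real^3)) = measure lborel (cbox (vector [a1,a2,a3]) (vector [b1,b2,b3] :: real^3))" by simp
  also have "\<dots> = (b1-a1)*(b2-a2)*(b3-a3)" using ne by (subst content_cbox_cart) (auto simp: prodU3)
  finally show ?thesis .
qed

lemma band_upper:
  assumes u: "norm u = 1" and h: "0 \<le> h"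
  shows "measure lebesgue (band u h) \<le> 8 * h"
proof -
  obtain f where f: "orthogonal_transformation f" "f (axis (3::3) (1::real)) = u"
  proof (rule orthogonal_transformation_exists[of "axis (3::3) (1::real)" u])
    show "norm (axis (3::3) (1::real)) = norm u" using u by simp
  qed (metis that)
  define C where "C = cbox (vector [-1, -1, -h]) (vector [1, 1, h] :: real^3)"
  have sub: "band u h \<subseteq> f ` C"
  proof
    fix g assume g: "g \<in> band u h"
    obtain y where y: "g = f y" using orthogonal_transformation_surj[OF f(1)] by (metis surjD)
    have ny: "norm y \<le> 1" using g y f(1) by (auto simp: band_def Sh_def orthogonal_transformation_norm)
    have c: "\<bar>y $ i\<bar> \<le> 1" for i using component_le_norm_cart[of y i] ny by simp
    have "\<bar>y $ 3\<bar> \<le> h * norm g" using g orth_axis3[OF f, of y] y by (auto simp: band_def)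
    also have "\<dots> \<le> h" using ny y f(1) h by (simp add: orthogonal_transformation_norm mult_left_le)
    finally have "\<bar>y $ 3\<bar> \<le> h" .
    hence "y \<in> C" using c[of 1] c[of 2] by (auto simp: C_def mem_box_cart forall_3)
    thus "g \<in> f ` C" using y by blast
  qed
  have "measure lebesgue (band u h) \<le> measure lebesgue (f ` C)"
    by (rule measure_mono_fmeasurable[OF sub]) (auto simp: band_lmeas C_def intro: measurable_orthogonal_image[OF f(1)] fmeasurableD)
  also have "\<dots> = measure lebesgue C" by (rule measure_orthogonal_image[OF f(1)]) (simp add: C_def)
  also have "\<dots> = 8 * h" using h unfolding C_def by (subst measure_box3) auto
  finally show ?thesis .
qed

lemma band_lower:
  assumes u: "norm u = 1" and h: "0 \<le> h" "h \<le> 1/10"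
  shows "126/125 * h \<le> measure lebesgue (band u h)"
proof -
  obtain f where f: "orthogonal_transformation f" "f (axis (3::3) (1::real)) = u"
  proof (rule orthogonal_transformation_exists[of "axis (3::3) (1::real)" u])
    show "norm (axis (3::3) (1::real)) = norm u" using u by simp
  qed (metis that)
  define B1 where "B1 = cbox (vector [3/5, -3/10, -3/5*h]) (vector [19/20, 3/10, 3/5*h] :: real^3)"
  define B2 where "B2 = cbox (vector [-19/20, -3/10, -3/5*h]) (vector [-3/5, 3/10, 3/5*h] :: real^3)"
  define B3 where "B3 = cbox (vector [-3/10, 3/5, -3/5*h]) (vector [3/10, 19/20, 3/5*h] :: real^3)"
  define B4 where "B4 = cbox (vector [-3/10, -19/20, -3/5*h]) (vector [3/10, -3/5, 3/5*h] :: real^3)"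
  define U where "U = (B1 \<union> B2) \<union> (B3 \<union> B4)"
  have nsq: "(norm y)^2 = (y$1)^2 + (y$2)^2 + (y$3)^2" for y :: "real^3"
  proof -
    have "(norm y)^2 = y \<bullet> y" by (simp add: power2_norm_eq_inner)
    thus ?thesis by (simp add: inner_vec_def sum_3 power2_eq_square)
  qed
  have hh: "(3/5*h)^2 \<le> 9/2500"
  proof -
    have "3/5*h \<le> 3/50" "0 \<le> 3/5*h" using h by auto
    from power_mono[OF this, of 2] show ?thesis by (simp add: power_divide)
  qed
  have inU: "norm y \<le> 1 \<and> 3/5 \<le> norm y \<and> \<bar>y$3\<bar> \<le> h * norm y" if "y \<in> U" for y
  proof -
    have c: "(\<bar>y$1\<bar> \<le> 19/20 \<and> \<bar>y$2\<bar> \<le> 3/10 \<and> 3/5 \<le> \<bar>y$1\<bar> \<or> \<bar>y$2\<bar> \<le> 19/20 \<and> \<bar>y$1\<bar> \<le> 3/10 \<and> 3/5 \<le> \<bar>y$2\<bar>) \<and> \<bar>y$3\<bar> \<le> 3/5*h"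
      using that by (auto simp: U_def B1_def B2_def B3_def B4_def mem_box_cart forall_3)
    have s1: "(y$1)^2 = \<bar>y$1\<bar>^2" "(y$2)^2 = \<bar>y$2\<bar>^2" "(y$3)^2 = \<bar>y$3\<bar>^2" by simp_all
    have b3: "\<bar>y$3\<bar>^2 \<le> 9/2500" using c hh power_mono[of "\<bar>y$3\<bar>" "3/5*h" 2] by simp
    have pm: "a \<le> b \<Longrightarrow> a^2 \<le> b^2" if "0 \<le> a" for a b :: real using that power_mono by blast
    have up: "(norm y)^2 \<le> 1"
    proof -
      have "\<bar>y$1\<bar>^2 \<le> (19/20)^2 \<and> \<bar>y$2\<bar>^2 \<le> (3/10)^2 \<or> \<bar>y$2\<bar>^2 \<le> (19/20)^2 \<and> \<bar>y$1\<bar>^2 \<le> (3/10)^2"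
        using c pm[of "\<bar>y$1\<bar>"] pm[of "\<bar>y$2\<bar>"] by auto
      hence "\<bar>y$1\<bar>^2 + \<bar>y$2\<bar>^2 \<le> (19/20)^2 + (3/10)^2" by auto
      moreover have "(19/20)^2 + (3/10)^2 + 9/2500 \<le> (1::real)" by (simp add: power_divide)
      ultimately show ?thesis using nsq[of y] s1 b3 by linarith
    qed
    have lo: "(3/5)^2 \<le> (norm y)^2"
    proof -
      have "(3/5)^2 \<le> \<bar>y$1\<bar>^2 \<or> (3/5)^2 \<le> \<bar>y$2\<bar>^2"
        using c pm[of "3/5" "\<bar>y$1\<bar>"] pm[of "3/5" "\<bar>y$2\<bar>"] by auto
      hence "(3/5)^2 \<le> \<bar>y$1\<bar>^2 + \<bar>y$2\<bar>^2" using zero_le_power2[of "\<bar>y$1\<bar>"] zero_le_power2[of "\<bar>y$2\<bar>"] by linarith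
      thus ?thesis using nsq[of y] s1 zero_le_power2[of "y$3"] by linarith
    qed
    have n1: "norm y \<le> 1" using up power2_le_imp_le[of "norm y" 1] by simp
    have n2: "3/5 \<le> norm y" using lo power2_le_imp_le[of "3/5" "norm y"] by simp
    have "\<bar>y$3\<bar> \<le> 3/5 * h" using c by simp
    also have "\<dots> \<le> h * norm y" using mult_left_mono[OF n2 h(1)] by (simp add: mult.commute)
    finally show ?thesis using n1 n2 by simp
  qed
  have sub: "f ` U \<subseteq> band u h"
  proof
    fix g assume "g \<in> f ` U"
    then obtain y where y: "y \<in> U" "g = f y" by auto
    have ng: "norm g = norm y" using y f(1) by (simp add: orthogonal_transformation_norm)
    have "g \<bullet> u = y $ 3" using orth_axis3[OF f, of y] y by simp
    thus "g \<in> band u h" using inU[OF y(1)] ng by (auto simp: band_def Sh_def)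
  qed
  have mB: "measure lebesgue B1 = 63/250 * h" "measure lebesgue B2 = 63/250 * h"
           "measure lebesgue B3 = 63/250 * h" "measure lebesgue B4 = 63/250 * h"
    unfolding B1_def B2_def B3_def B4_def using h by (subst measure_box3; simp)+
  have x1: "3/5 \<le> x$1" if "x \<in> B1" for x using that by (simp add: B1_def mem_box_cart forall_3)
  have x2: "x$1 \<le> -3/5" if "x \<in> B2" for x using that by (simp add: B2_def mem_box_cart forall_3)
  have x3: "3/5 \<le> x$2 \<and> \<bar>x$1\<bar> \<le> 3/10" if "x \<in> B3" for x using that unfolding B3_def mem_box_cart forall_3 by auto
  have x4: "x$2 \<le> -3/5 \<and> \<bar>x$1\<bar> \<le> 3/10" if "x \<in> B4" for x using that unfolding B4_def mem_box_cart forall_3 by auto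
  have d12: "B1 \<inter> B2 = {}" using x1 x2 by force
  have d34: "B3 \<inter> B4 = {}" using x3 x4 by force
  have d: "(B1 \<union> B2) \<inter> (B3 \<union> B4) = {}" using x1 x2 x3 x4 by force
  have l1: "B1 \<in> lmeasurable" and l2: "B2 \<in> lmeasurable" and l3: "B3 \<in> lmeasurable" and l4: "B4 \<in> lmeasurable"
    by (simp_all add: B1_def B2_def B3_def B4_def)
  have m12: "measure lebesgue (B1 \<union> B2) = measure lebesgue B1 + measure lebesgue B2"
    using measure_Un3[OF l1 l2] d12 by simp
  have m34: "measure lebesgue (B3 \<union> B4) = measure lebesgue B3 + measure lebesgue B4"
    using measure_Un3[OF l3 l4] d34 by simp
  have mU: "measure lebesgue U = 126/125 * h"
    using measure_Un3[OF fmeasurable.Un[OF l1 l2] fmeasurable.Un[OF l3 l4]] d m12 m34 mB unfolding U_def by simp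
  have Ul: "U \<in> lmeasurable" unfolding U_def using l1 l2 l3 l4 by (intro fmeasurable.Un)
  have "126/125 * h = measure lebesgue (f ` U)" using mU measure_orthogonal_image[OF f(1) Ul] by simp
  also have "\<dots> \<le> measure lebesgue (band u h)"
    by (rule measure_mono_fmeasurable[OF sub]) (auto simp: band_lmeas intro: measurable_orthogonal_image[OF f(1) Ul] fmeasurableD)
  finally show ?thesis .
qed



lemma prob_method:
  fixes M :: "'a measure" and A B :: "'v \<Rightarrow> 'a set"
  assumes fm: "finite_measure M" and fV: "finite V"
    and AB: "\<And>u. u \<in> V \<Longrightarrow> A u \<in> sets M \<and> B u \<in> sets M"
    and ineq: "(\<Sum>u\<in>V. measure M (space M - A u) ^ N
               + real (N choose t) * (measure M (B u) ^ t * measure M (space M) ^ (N - t)))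
               < measure M (space M) ^ N"
  shows "\<exists>\<omega>. (\<forall>i<N. \<omega> i \<in> space M) \<and> (\<forall>u\<in>V. (\<exists>i<N. \<omega> i \<in> A u) \<and> card {i. i < N \<and> \<omega> i \<in> B u} < t)"
proof (rule ccontr)
  assume nex: "\<not> ?thesis"
  interpret M: finite_measure M by (rule fm)
  interpret P: product_sigma_finite "\<lambda>_. M"
    unfolding product_sigma_finite_def using M.sigma_finite_measure_axioms by simp
  define I where "I = {..<N}"
  define P where "P = PiM I (\<lambda>_. M)"
  define Ts where "Ts = {T. T \<subseteq> I \<and> card T = t}"
  define E1 where "E1 u = PiE I (\<lambda>_. space M - A u)" for u
  define E2 where "E2 u T = PiE I (\<lambda>i. if i \<in> T then B u else space M)" for u T
  have fI: "finite I" by (simp add: I_def)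
  have fTs: "finite Ts" unfolding Ts_def using fI by (simp add: finite_Pow_iff)
  have cTs: "card Ts = N choose t" unfolding Ts_def I_def using n_subsets[of "{..<N}" t] by simp
  have emP: "emeasure P (PiE I X) = ennreal (\<Prod>i\<in>I. measure M (X i))" if "\<And>i. i \<in> I \<Longrightarrow> X i \<in> sets M" for X
  proof -
    have "emeasure P (PiE I X) = (\<Prod>i\<in>I. emeasure M (X i))"
      unfolding P_def by (rule P.emeasure_PiM[OF fI that])
    also have "\<dots> = (\<Prod>i\<in>I. ennreal (measure M (X i)))"
      by (intro prod.cong refl) (simp add: M.emeasure_eq_measure)
    also have "\<dots> = ennreal (\<Prod>i\<in>I. measure M (X i))" by (rule prod_ennreal) simp
    finally show ?thesis .
  qed
  have sE1: "E1 u \<in> sets P" if "u \<in> V" for u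
    unfolding E1_def P_def using AB[OF that] fI by (intro sets_PiM_I_finite) auto
  have sE2: "E2 u T \<in> sets P" if "u \<in> V" for u T
    unfolding E2_def P_def using AB[OF that] fI by (intro sets_PiM_I_finite) auto
  have mE1: "emeasure P (E1 u) = ennreal (measure M (space M - A u) ^ N)" if "u \<in> V" for u
    unfolding E1_def using AB[OF that] by (subst emP) (auto simp: I_def)
  have mE2: "emeasure P (E2 u T) = ennreal (measure M (B u) ^ t * measure M (space M) ^ (N - t))"
    if "u \<in> V" "T \<in> Ts" for u T
  proof -
    have TI: "T \<subseteq> I" "card T = t" using that(2) by (auto simp: Ts_def)
    have "emeasure P (E2 u T) = ennreal (\<Prod>i\<in>I. if i \<in> T then measure M (B u) else measure M (space M))"
      unfolding E2_def using AB[OF that(1)] by (subst emP) (auto intro!: prod.cong simp: if_distrib)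
    also have "(\<Prod>i\<in>I. if i \<in> T then measure M (B u) else measure M (space M))
       = measure M (B u) ^ card (I \<inter> {i. i \<in> T}) * measure M (space M) ^ card (I \<inter> - {i. i \<in> T})"
      by (simp add: prod.If_cases[OF fI])
    also have "I \<inter> {i. i \<in> T} = T" using TI by auto
    also have "card (I \<inter> - {i. i \<in> T}) = N - t"
    proof -
      have "I \<inter> - {i. i \<in> T} = I - T" by auto
      thus ?thesis using TI fI by (simp add: card_Diff_subset finite_subset I_def)
    qed
    finally show ?thesis using TI by simp
  qed
  have spP: "space P = PiE I (\<lambda>_. space M)" by (simp add: P_def space_PiM)
  have cover: "space P \<subseteq> (\<Union>u\<in>V. E1 u \<union> (\<Union>T\<in>Ts. E2 u T))"
  proof
    fix \<omega> assume \<omega>: "\<omega> \<in> space P"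
    hence \<omega>': "\<forall>i<N. \<omega> i \<in> space M" using spP by (auto simp: I_def)
    then obtain u where u: "u \<in> V" "\<not> ((\<exists>i<N. \<omega> i \<in> A u) \<and> card {i. i < N \<and> \<omega> i \<in> B u} < t)"
      using nex by blast
    show "\<omega> \<in> (\<Union>u\<in>V. E1 u \<union> (\<Union>T\<in>Ts. E2 u T))"
    proof (cases "\<exists>i<N. \<omega> i \<in> A u")
      case False
      hence "\<omega> \<in> E1 u" using \<omega> spP by (auto simp: E1_def I_def PiE_def Pi_def)
      thus ?thesis using u by blast
    next
      case True
      hence ct: "t \<le> card {i. i < N \<and> \<omega> i \<in> B u}" using u by simp
      obtain T where T: "T \<subseteq> {i. i < N \<and> \<omega> i \<in> B u}" "card T = t"
        using obtain_subset_with_card_n[OF ct] by blast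
      have "T \<in> Ts" using T by (auto simp: Ts_def I_def)
      moreover have "\<omega> \<in> E2 u T" using \<omega> spP T by (auto simp: E2_def I_def PiE_def Pi_def)
      ultimately show ?thesis using u by blast
    qed
  qed
  have "emeasure P (space P) \<le> emeasure P (\<Union>u\<in>V. E1 u \<union> (\<Union>T\<in>Ts. E2 u T))"
    by (rule emeasure_mono[OF cover]) (auto intro!: sets.finite_UN sets.Un fV fTs sE1 sE2)
  also have "\<dots> \<le> (\<Sum>u\<in>V. emeasure P (E1 u \<union> (\<Union>T\<in>Ts. E2 u T)))"
    by (rule emeasure_subadditive_finite[OF fV]) (auto intro!: sets.finite_UN sets.Un fTs sE1 sE2)
  also have "\<dots> \<le> (\<Sum>u\<in>V. emeasure P (E1 u) + (\<Sum>T\<in>Ts. emeasure P (E2 u T)))"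
  proof (rule sum_mono)
    fix u assume u: "u \<in> V"
    have "emeasure P (E1 u \<union> (\<Union>T\<in>Ts. E2 u T)) \<le> emeasure P (E1 u) + emeasure P (\<Union>T\<in>Ts. E2 u T)"
      by (rule emeasure_subadditive) (use sE1 sE2 fTs u in auto)
    also have "emeasure P (\<Union>T\<in>Ts. E2 u T) \<le> (\<Sum>T\<in>Ts. emeasure P (E2 u T))"
      by (rule emeasure_subadditive_finite[OF fTs]) (use sE2 u in auto)
    finally show "emeasure P (E1 u \<union> (\<Union>T\<in>Ts. E2 u T)) \<le> emeasure P (E1 u) + (\<Sum>T\<in>Ts. emeasure P (E2 u T))"
      by (simp add: add_left_mono)
  qed
  also have "\<dots> = (\<Sum>u\<in>V. ennreal (measure M (space M - A u) ^ N
               + real (N choose t) * (measure M (B u) ^ t * measure M (space M) ^ (N - t))))"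
  proof (rule sum.cong[OF refl])
    fix u assume u: "u \<in> V"
    have "(\<Sum>T\<in>Ts. emeasure P (E2 u T)) = (\<Sum>T\<in>Ts. ennreal (measure M (B u) ^ t * measure M (space M) ^ (N - t)))"
      using mE2[OF u] by simp
    also have "\<dots> = ennreal (real (N choose t) * (measure M (B u) ^ t * measure M (space M) ^ (N - t)))"
      using cTs by (simp add: ennreal_mult' ennreal_of_nat_eq_real_of_nat)
    finally show "emeasure P (E1 u) + (\<Sum>T\<in>Ts. emeasure P (E2 u T)) = ennreal (measure M (space M - A u) ^ N
               + real (N choose t) * (measure M (B u) ^ t * measure M (space M) ^ (N - t)))"
      using mE1[OF u] by (simp add: ennreal_plus)
  qed
  also have "\<dots> = ennreal (\<Sum>u\<in>V. measure M (space M - A u) ^ N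
               + real (N choose t) * (measure M (B u) ^ t * measure M (space M) ^ (N - t)))"
    by (rule sum_ennreal) simp
  finally have le: "emeasure P (space P) \<le> ennreal (\<Sum>u\<in>V. measure M (space M - A u) ^ N
               + real (N choose t) * (measure M (B u) ^ t * measure M (space M) ^ (N - t)))" .
  have "emeasure P (space P) = ennreal (measure M (space M) ^ N)"
    unfolding spP by (subst emP) (auto simp: I_def)
  with le ineq show False
    by (simp add: ennreal_le_iff sum_nonneg)
qed



lemma exp_big: fixes L :: real assumes "25 \<le> L" shows "101 * L \<le> exp L"
proof -
  have "L^3 / fact 3 \<le> exp L" using pow_fact_le_exp[of L 3] assms by simp
  moreover have "101 * L \<le> L^3 / 6"
  proof -
    have "625 \<le> L * L" using mult_mono[of 25 L 25 L] assms by simp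
    hence "606 \<le> L * L" by simp
    hence "606 * L \<le> L * L * L" using assms by (intro mult_right_mono) auto
    thus ?thesis by (simp add: power3_eq_cube)
  qed
  ultimately show ?thesis by (simp add: fact_numeral)
qed

lemma term1:
  fixes a m L :: real and N :: nat
  assumes "0 \<le> a" "a \<le> m" "0 < m" "12/5 * L \<le> a * N / m"
  shows "(m - a) ^ N \<le> m ^ N * exp (- (12/5 * L))"
proof -
  have "(m - a) ^ N = m ^ N * (1 - a/m) ^ N" using assms(3)
    by (simp add: power_mult_distrib[symmetric] algebra_simps)
  also have "(1 - a/m) ^ N \<le> exp (- (a/m)) ^ N"
    using assms exp_ge_add_one_self[of "- (a/m)"] by (intro power_mono) auto
  also have "exp (- (a/m)) ^ N = exp (- (a * N / m))" by (simp add: exp_of_nat_mult[symmetric] algebra_simps)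
  also have "\<dots> \<le> exp (- (12/5 * L))" using assms(4) by simp
  finally show ?thesis using assms(3) by (simp add: mult_left_mono)
qed

lemma term2:
  fixes b m L :: real and N t :: nat
  assumes "t \<le> N" "0 \<le> b" "0 < m" "N * b / m \<le> 30 * L" "0 \<le> L" "100 * L \<le> t"
  shows "real (N choose t) * (b ^ t * m ^ (N - t)) \<le> m ^ N * exp (- (10 * L))"
proof -
  have c: "real (N choose t) * fact t \<le> real N ^ t"
    using binomial_fact_pow[of N t] by (metis of_nat_fact of_nat_le_iff of_nat_mult of_nat_power)
  have mN: "m ^ N = m ^ t * m ^ (N - t)" using assms(1) by (simp add: power_add[symmetric])
  have "real (N choose t) * (b ^ t * m ^ (N - t)) = m ^ N * (real (N choose t) * (b / m) ^ t)"
    using assms(3) mN by (simp add: power_divide field_simps)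
  also have "real (N choose t) * (b / m) ^ t \<le> (N * b / m) ^ t / fact t"
  proof -
    have "real (N choose t) = real (N choose t) * fact t / fact t" by simp
    also have "\<dots> \<le> real N ^ t / fact t" using c by (intro divide_right_mono) auto
    finally have "real (N choose t) * (b / m) ^ t \<le> real N ^ t / fact t * (b / m) ^ t"
      using assms by (intro mult_right_mono) auto
    thus ?thesis by (simp add: power_mult_distrib power_divide field_simps)
  qed
  also have "(N * b / m) ^ t / fact t \<le> (30 * L) ^ t / fact t"
    using assms by (intro divide_right_mono power_mono) auto
  also have "(30 * L) ^ t / fact t = (exp 1 * (30 * L)) ^ t / fact t / exp (real t)"
    by (simp add: power_mult_distrib exp_of_nat_mult[symmetric])
  also have "\<dots> \<le> exp (exp 1 * (30 * L)) / exp (real t)"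
    using pow_fact_le_exp[of "exp 1 * (30 * L)" t] assms by (intro divide_right_mono) auto
  also have "\<dots> \<le> exp (90 * L) / exp (100 * L)"
  proof (intro frac_le)
    show "exp (exp 1 * (30 * L)) \<le> exp (90 * L)" using mult_left_mono[OF exp_le assms(5)] by (simp add: mult.commute)
    show "exp (100 * L) \<le> exp (real t)" using assms(6) by simp
  qed auto
  also have "\<dots> = exp (- (10 * L))" by (simp add: exp_diff[symmetric])
  finally show ?thesis using assms(3) by (simp add: mult_left_mono)
qed

lemma card_NV_bound:
  fixes n L :: real
  assumes "1 \<le> L" "L \<le> n"
  shows "real (card (NV (L / (3 * n)))) \<le> 220 * n ^ 2"
proof -
  define e where "e = L / (3 * n)"
  have e: "0 < e" using assms by (simp add: e_def)
  have pe: "pi / e = 3 * pi * n / L" using assms by (simp add: e_def field_simps)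
  have pe2: "pi / e \<le> 3 * pi * n" unfolding pe using assms pi_gt_zero
    by (simp add: divide_le_eq)
  have a: "real (nat \<lfloor>pi/e\<rfloor>) \<le> pi / e" using e pi_gt_zero by (simp add: of_nat_nat)
  have b: "real (nat \<lfloor>2*pi/e\<rfloor>) \<le> 2 * pi / e" using e pi_gt_zero by (simp add: of_nat_nat)
  have "real (card (NV e)) \<le> real ((nat \<lfloor>pi/e\<rfloor> + 1) * (nat \<lfloor>2*pi/e\<rfloor> + 1))"
    using NV_card of_nat_le_iff by blast
  also have "\<dots> = (real (nat \<lfloor>pi/e\<rfloor>) + 1) * (real (nat \<lfloor>2*pi/e\<rfloor>) + 1)" by (simp add: algebra_simps)
  also have "\<dots> \<le> (3 * pi * n + 1) * (6 * pi * n + 1)"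
  proof -
    have a': "real (nat \<lfloor>pi/e\<rfloor>) \<le> 3 * pi * n" using a pe2 by linarith
    have "2 * pi / e = 2 * (pi / e)" by simp
    hence b': "real (nat \<lfloor>2*pi/e\<rfloor>) \<le> 6 * pi * n" using b pe2 by linarith
    show ?thesis using a' b' by (intro mult_mono) auto
  qed
  also have "\<dots> \<le> (11 * n) * (20 * n)"
  proof -
    have p: "pi \<le> 63/20" using pi_approx by simp
    have "pi * n \<le> 63/20 * n" using mult_right_mono[OF p] assms by simp
    hence "3 * pi * n + 1 \<le> 11 * n" "6 * pi * n + 1 \<le> 20 * n" using assms by linarith+
    thus ?thesis using assms pi_gt_zero by (intro mult_mono) auto
  qed
  also have "\<dots> = 220 * n^2" by (simp add: power2_eq_square)
  finally show ?thesis by (simp add: e_def)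
qed

lemma measure_Sh_bounds: "82/25 \<le> measure lebesgue Sh" "measure lebesgue Sh \<le> 329/100"
  using pi_approx by (simp_all add: measure_Sh)

lemma ln_ge_25: assumes "(10::real)^12 \<le> n" shows "25 \<le> ln n"
proof -
  have "exp (25::real) = exp 1 ^ 25" by (simp add: exp_of_nat_mult[symmetric])
  also have "\<dots> \<le> 3 ^ 25" by (rule power_mono[OF exp_le]) simp
  also have "\<dots> \<le> n" using assms by simp
  finally have "exp 25 \<le> n" .
  moreover have "0 < n" by (rule less_le_trans[OF _ assms]) simp
  ultimately show ?thesis by (simp add: ln_ge_iff)
qed

theorem theorem1p4:
  "\<exists>c::real. \<exists>N0::nat. \<forall>N::nat. N \<ge> N0 \<longrightarrow>
     (\<exists>x :: nat \<Rightarrow> real^3.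
        (\<forall>i<N. x i \<in> sphere2) \<and>
        sphere2 \<subseteq> (\<Union>i<N. strip (x i) (10 * ln (real N) / real N)) \<and>
        (\<forall>v\<in>sphere2. real (card {i. i < N \<and> v \<in> strip (x i) (10 * ln (real N) / real N)})
                         \<le> c * ln (real N)))"
proof (intro exI[of _ "101::real"] exI[of _ "10^12::nat"] allI impI)
  fix N :: nat
  assume N: "10^12 \<le> N"
  define n where "n = real N"
  define L where "L = ln n"
  have n12: "(10::real)^12 \<le> n" using N unfolding n_def by (metis of_nat_le_iff of_nat_numeral of_nat_power)
  have npos: "0 < n" by (rule less_le_trans[OF _ n12]) simp
  have L25: "25 \<le> L" unfolding L_def by (rule ln_ge_25[OF n12])
  have expL: "exp L = n" using npos by (simp add: L_def)
  have nL: "101 * L \<le> n" using exp_big[OF L25] expL by simp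
  define e where "e = L / (3 * n)"
  define h1 where "h1 = 8 * L / n"
  define h2 where "h2 = 12 * L / n"
  define w where "w = 10 * L / n"
  define t where "t = nat \<lceil>100 * L\<rceil>"
  have e0: "0 < e" using npos L25 by (simp add: e_def)
  have e6: "h1 + 6 * e = w" "w + 6 * e = h2" using npos by (simp_all add: e_def h1_def h2_def w_def field_simps)
  have h1b: "0 \<le> h1" "h1 \<le> 1/10" using npos L25 nL by (simp_all add: h1_def field_simps)
  have h2b: "0 \<le> h2" using npos L25 by (simp add: h2_def)
  have tL: "100 * L \<le> real t" "real t \<le> 100 * L + 1" using L25 by (simp_all add: t_def)
  have tN: "t \<le> N" using tL nL L25 unfolding n_def by linarith
  define M where "M = restrict_space lebesgue Sh"
  have ShM: "Sh \<in> sets lebesgue" using Sh_lmeas by (simp add: fmeasurableD)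
  have spM: "space M = Sh" by (simp add: M_def space_restrict_space)
  have setsM: "X \<in> sets M" if "X \<subseteq> Sh" "X \<in> sets lebesgue" for X
    using that ShM by (simp add: M_def sets_restrict_space_iff)
  have measM: "measure M X = measure lebesgue X" if "X \<subseteq> Sh" for X
    using that ShM by (simp add: M_def measure_restrict_space)
  have fmM: "finite_measure M"
  proof (rule finite_measureI)
    have "emeasure M (space M) = emeasure lebesgue Sh"
      unfolding spM unfolding M_def by (rule emeasure_restrict_space) (use ShM in auto)
    thus "emeasure M (space M) \<noteq> \<infinity>" using fmeasurableD2[OF Sh_lmeas] by simp
  qed
  define mS where "mS = measure lebesgue Sh"
  have mSb: "82/25 \<le> mS" "mS \<le> 329/100" using measure_Sh_bounds by (simp_all add: mS_def)
  define V where "V = NV e"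
  have fV: "finite V" by (simp add: V_def NV_finite)
  have bandM: "band u h \<in> sets M" for u h using band_sub band_lmeas by (intro setsM) (auto simp: fmeasurableD)
  have per_u: "measure M (space M - band u h1) ^ N + real (N choose t) * (measure M (band u h2) ^ t * measure M (space M) ^ (N - t))
       \<le> mS ^ N * (2 * exp (- (12/5 * L)))" if u: "u \<in> V" for u
  proof -
    have nu: "norm u = 1" using u NV_norm by (simp add: V_def)
    define a where "a = measure lebesgue (band u h1)"
    define b where "b = measure lebesgue (band u h2)"
    have a1: "126/125 * h1 \<le> a" using band_lower[OF nu h1b] by (simp add: a_def)
    have a2: "a \<le> mS" unfolding a_def mS_def
      by (rule measure_mono_fmeasurable[OF band_sub]) (auto simp: band_lmeas Sh_lmeas fmeasurableD)
    have b1: "b \<le> 8 * h2" using band_upper[OF nu h2b] by (simp add: b_def)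
    have b0: "0 \<le> b" by (simp add: b_def)
    have Sinf: "emeasure lebesgue Sh \<noteq> (\<infinity>::ennreal)"
      using fmeasurableD2[OF Sh_lmeas] unfolding infinity_ennreal_def .
    have d0: "measure lebesgue (Sh - band u h1) = measure lebesgue Sh - measure lebesgue (band u h1)"
      using measure_Diff[of lebesgue Sh "band u h1"] Sinf ShM fmeasurableD[OF band_lmeas] band_sub
      by blast
    have d: "measure M (space M - band u h1) = mS - a"
      using d0 measM[of "Sh - band u h1"] spM by (simp add: a_def mS_def)
    have t1: "(mS - a) ^ N \<le> mS ^ N * exp (- (12/5 * L))"
    proof (rule term1)
      show "0 \<le> a" by (simp add: a_def)
      show "a \<le> mS" by (rule a2)
      show "0 < mS" using mSb by simp
      have hn: "(126/125 * h1) * n = 1008/125 * L" using npos by (simp add: h1_def)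
      have m0: "0 < mS" using mSb by simp
      have "12/5 * L * mS \<le> 12/5 * L * (329/100)" using mSb L25 by (intro mult_left_mono) auto
      also have "\<dots> \<le> 1008/125 * L" using L25 by simp
      finally have "12/5 * L \<le> 1008/125 * L / mS" using m0 by (simp add: pos_le_divide_eq)
      hence "12/5 * L \<le> (126/125 * h1) * n / mS" by (simp only: hn)
      also have "\<dots> \<le> a * N / mS" using a1 npos mSb unfolding n_def
        by (intro divide_right_mono mult_right_mono) auto
      finally show "12/5 * L \<le> a * N / mS" .
    qed
    have t2: "real (N choose t) * (b ^ t * mS ^ (N - t)) \<le> mS ^ N * exp (- (10 * L))"
    proof (rule term2[OF tN b0])
      show "0 < mS" using mSb by simp
      have "N * b / mS \<le> N * (8 * h2) / mS" using b1 mSb by (intro divide_right_mono mult_left_mono) auto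
      also have "\<dots> = 96 * L / mS" using npos by (simp add: h2_def n_def)
      also have "\<dots> \<le> 30 * L"
      proof -
        have m0: "0 < mS" using mSb by simp
        have "96 * L \<le> 30 * L * (82/25)" using L25 by simp
        also have "\<dots> \<le> 30 * L * mS" using mSb L25 by (intro mult_left_mono) auto
        finally show ?thesis using m0 by (simp add: pos_divide_le_eq)
      qed
      finally show "N * b / mS \<le> 30 * L" .
      show "0 \<le> L" using L25 by simp
      show "100 * L \<le> real t" by (rule tL)
    qed
    have "exp (- (10 * L)) \<le> exp (- (12/5 * L))" using L25 by simp
    hence ee: "mS ^ N * exp (- (10 * L)) \<le> mS ^ N * exp (- (12/5 * L))" using mSb by (intro mult_left_mono) auto
    have q1: "measure M (space M) = mS" using spM measM[of Sh] by (simp add: mS_def)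
    have q2: "measure M (band u h2) = b" using measM[OF band_sub] by (simp add: b_def)
    have "measure M (space M - band u h1) ^ N + real (N choose t) * (measure M (band u h2) ^ t * measure M (space M) ^ (N - t))
       \<le> mS ^ N * exp (- (12/5 * L)) + mS ^ N * exp (- (12/5 * L))" unfolding q1 q2 d using t1 t2 ee by linarith
    thus ?thesis by (simp add: distrib_left)
  qed
  have ineq: "(\<Sum>u\<in>V. measure M (space M - band u h1) ^ N
               + real (N choose t) * (measure M (band u h2) ^ t * measure M (space M) ^ (N - t)))
               < measure M (space M) ^ N"
  proof -
    have "(\<Sum>u\<in>V. measure M (space M - band u h1) ^ N
               + real (N choose t) * (measure M (band u h2) ^ t * measure M (space M) ^ (N - t)))
          \<le> (\<Sum>u\<in>V. mS ^ N * (2 * exp (- (12/5 * L))))" by (rule sum_mono[OF per_u])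
    also have "\<dots> = real (card V) * (mS ^ N * (2 * exp (- (12/5 * L))))" by simp
    also have "\<dots> \<le> (220 * n^2) * (mS ^ N * (2 * exp (- (12/5 * L))))"
      using card_NV_bound[of L n] L25 nL mSb unfolding V_def e_def by (intro mult_right_mono) auto
    also have "\<dots> = mS ^ N * (440 * exp (- (2/5 * L)))"
    proof -
      have "exp (2 * L) = exp L * exp L" by (metis exp_add mult_2)
      hence "n^2 = exp (2 * L)" using expL by (simp add: power2_eq_square)
      hence "n^2 * exp (- (12/5 * L)) = exp (2 * L + - (12/5 * L))" by (simp only: exp_add)
      also have "2 * L + - (12/5 * L) = - (2/5 * L)" by simp
      finally have e: "n^2 * exp (- (12/5 * L)) = exp (- (2/5 * L))" .
      have "(220 * n^2) * (mS ^ N * (2 * exp (- (12/5 * L)))) = mS ^ N * (440 * (n^2 * exp (- (12/5 * L))))"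
        by (simp only: mult_ac)
      thus ?thesis by (simp only: e)
    qed
    also have "\<dots> < mS ^ N * 1"
    proof (rule mult_strict_left_mono)
      have "exp (- (2/5 * L)) \<le> exp (-10)" using L25 by simp
      moreover have "10^5 / fact 5 \<le> exp (10::real)" using pow_fact_le_exp[of 10 5] by simp
      hence "440 < exp (10::real)" by (simp add: fact_numeral)
      ultimately have "440 * exp (- (2/5 * L)) \<le> 440 * exp (-10)" by simp
      also have "440 * exp (-10) < exp 10 * exp (-10::real)" using \<open>440 < exp 10\<close> by simp
      also have "exp 10 * exp (-10::real) = 1" by (simp add: exp_add[symmetric])
      finally show "440 * exp (- (2/5 * L)) < 1" .
      show "0 < mS ^ N" using mSb by simp
    qed
    also have "\<dots> = measure M (space M) ^ N" using spM measM[of Sh] by (simp add: mS_def)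
    finally show ?thesis .
  qed
  obtain \<omega> where \<omega>: "\<forall>i<N. \<omega> i \<in> space M"
    "\<forall>u\<in>V. (\<exists>i<N. \<omega> i \<in> band u h1) \<and> card {i. i < N \<and> \<omega> i \<in> band u h2} < t"
    using prob_method[OF fmM fV _ ineq] bandM by blast
  have \<omega>S: "\<omega> i \<in> Sh" if "i < N" for i using \<omega>(1) that spM by auto
  have \<omega>n: "3/5 \<le> norm (\<omega> i)" if "i < N" for i using \<omega>S[OF that] by (auto simp: Sh_def)
  define x where "x i = (1 / norm (\<omega> i)) *\<^sub>R \<omega> i" for i
  have xn: "norm (x i) = 1" if "i < N" for i
  proof -
    have "norm (\<omega> i) \<noteq> 0" using \<omega>n[OF that] by linarith
    thus ?thesis by (simp add: x_def)
  qed
  have xin: "\<bar>x i \<bullet> u\<bar> \<le> h \<longleftrightarrow> \<bar>\<omega> i \<bullet> u\<bar> \<le> h * norm (\<omega> i)" if "i < N" for i u h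
  proof -
    have p: "0 < norm (\<omega> i)" using \<omega>n[OF that] by linarith
    have "x i \<bullet> u = (\<omega> i \<bullet> u) / norm (\<omega> i)" by (simp add: x_def)
    thus ?thesis using p by (simp add: abs_div pos_divide_le_eq)
  qed
  have near: "\<bar>v \<bullet> x i\<bar> \<le> \<bar>u \<bullet> x i\<bar> + 6 * e" if "i < N" "norm (v - u) \<le> 6 * e" for i v u
  proof -
    have "v \<bullet> x i = u \<bullet> x i + (v - u) \<bullet> x i" by (simp add: inner_diff_left)
    moreover have "\<bar>(v - u) \<bullet> x i\<bar> \<le> norm (v - u) * norm (x i)" by (rule Cauchy_Schwarz_ineq2)
    hence "\<bar>(v - u) \<bullet> x i\<bar> \<le> norm (v - u)" using xn[OF that(1)] by simp
    moreover have "\<bar>u \<bullet> x i + (v - u) \<bullet> x i\<bar> \<le> \<bar>u \<bullet> x i\<bar> + \<bar>(v - u) \<bullet> x i\<bar>" by (rule abs_triangle_ineq)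
    ultimately show ?thesis using that by linarith
  qed
  have wN: "10 * ln (real N) / real N = w" by (simp add: w_def L_def n_def)
  show "\<exists>x :: nat \<Rightarrow> real^3.
        (\<forall>i<N. x i \<in> sphere2) \<and>
        sphere2 \<subseteq> (\<Union>i<N. strip (x i) (10 * ln (real N) / real N)) \<and>
        (\<forall>v\<in>sphere2. real (card {i. i < N \<and> v \<in> strip (x i) (10 * ln (real N) / real N)})
                         \<le> 101 * ln (real N))"
  proof (intro exI[of _ x] conjI ballI allI impI subsetI)
    fix i assume "i < N" thus "x i \<in> sphere2" using xn by (simp add: sphere2_def)
  next
    fix v assume v: "v \<in> sphere2"
    obtain u where u: "u \<in> V" "norm (v - u) \<le> 6 * e" using NV_net[OF e0, of v] v by (auto simp: V_def sphere2_def)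
    obtain i where i: "i < N" "\<omega> i \<in> band u h1" using \<omega>(2) u(1) by blast
    have "\<bar>x i \<bullet> u\<bar> \<le> h1" using xin[OF i(1)] i(2) by (simp add: band_def)
    hence "\<bar>v \<bullet> x i\<bar> \<le> w" using near[OF i(1) u(2)] e6 by (simp add: inner_commute)
    thus "v \<in> (\<Union>i<N. strip (x i) (10 * ln (real N) / real N))" using i v wN by (auto simp: strip_def)
  next
    fix v assume v: "v \<in> sphere2"
    obtain u where u: "u \<in> V" "norm (v - u) \<le> 6 * e" using NV_net[OF e0, of v] v by (auto simp: V_def sphere2_def)
    have nvu: "norm (u - v) \<le> 6 * e" using u(2) by (simp add: norm_minus_commute)
    have sub: "{i. i < N \<and> v \<in> strip (x i) (10 * ln (real N) / real N)} \<subseteq> {i. i < N \<and> \<omega> i \<in> band u h2}"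
    proof
      fix i assume "i \<in> {i. i < N \<and> v \<in> strip (x i) (10 * ln (real N) / real N)}"
      hence i: "i < N" "\<bar>v \<bullet> x i\<bar> \<le> w" using wN by (auto simp: strip_def)
      have "\<bar>u \<bullet> x i\<bar> \<le> h2" using near[OF i(1) nvu] i(2) e6 by linarith
      hence "\<bar>\<omega> i \<bullet> u\<bar> \<le> h2 * norm (\<omega> i)" using xin[OF i(1)] by (simp add: inner_commute)
      thus "i \<in> {i. i < N \<and> \<omega> i \<in> band u h2}" using i \<omega>S[OF i(1)] by (simp add: band_def)
    qed
    have "card {i. i < N \<and> v \<in> strip (x i) (10 * ln (real N) / real N)} \<le> card {i. i < N \<and> \<omega> i \<in> band u h2}"
      by (rule card_mono[OF _ sub]) simp
    also have "\<dots> < t" using \<omega>(2) u(1) by blast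
    finally have "real (card {i. i < N \<and> v \<in> strip (x i) (10 * ln (real N) / real N)}) \<le> real t - 1" by linarith
    also have "\<dots> \<le> 101 * ln (real N)" using tL L25 unfolding L_def n_def by linarith
    finally show "real (card {i. i < N \<and> v \<in> strip (x i) (10 * ln (real N) / real N)}) \<le> 101 * ln (real N)" .
  qed
qed


end
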